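(* Let $\mathbb{F}_q$ be a finite field, $\mathcal{C}\subseteq\mathbb{F}_q^n$ a linear $[n,k]$ code with dual code $\mathcal{C}^\perp$, and $\mathbb{P}$ a poset on $[n]=\{1,\dots,n\}$ with dual poset $\widetilde{\mathbb{P}}$. Let $A=\{d_r^{\mathbb{P}}(\mathcal{C}):1\le r\le k\}$ and $B=\{n+1-d_s^{\widetilde{\mathbb{P}}}(\mathcal{C}^\perp):1\le s\le n-k\}$. Then $A$ and $B$ are disjoint and $[n]=A\cup B$.
   Context: The dual poset $\widetilde{\mathbb{P}}$ has $i\le_{\widetilde{\mathbb{P}}}j$ iff $j\le_{\mathbb{P}}i$. For $J\subseteq[n]$, $\langle J\rangle_{\mathbb{P}}=\{i:i\le_{\mathbb{P}}j\text{ for some }j\in J\}$, and similarly for $\widetilde{\mathbb{P}}$. For $u\in\mathbb{F}_q^n$, $\mathrm{supp}(u)=\{i:u_i\ne0\}$; for $D\subseteq\mathbb{F}_q^n$, $\mathrm{supp}(D)=\bigcup_{u\in D}\mathrm{supp}(u)$ and $w_{\mathbb{P}}(D)=|\langle\mathrm{supp}(D)\rangle_{\mathbb{P}}|$. The $r$-th generalized minimum $\mathbb{P}$-weight is $d_r^{\mathbb{P}}(\mathcal{C})=\min\{w_{\mathbb{P}}(D): D \text{ an } r\text{-dimensional subspace of }\mathcal{C}\}$, and $d_s^{\widetilde{\mathbb{P}}}(\mathcal{C}^\perp)=\min\{w_{\widetilde{\mathbb{P}}}(D): D \text{ an } s\text{-dimensional subspace of }\mathcal{C}^\perp\}$. 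*)

theory Defs
  imports Complex_Main "HOL-Library.Function_Algebras"
begin

text \<open>Vectors of F_q^n are modelled as functions nat => 'a vanishing outside [n] = {1..n}.\<close>

definition fscale :: "'a::field \<Rightarrow> (nat \<Rightarrow> 'a) \<Rightarrow> (nat \<Rightarrow> 'a)" where
  "fscale c v = (\<lambda>i. c * v i)"

definition ambient :: "nat \<Rightarrow> (nat \<Rightarrow> 'a::zero) set" where
  "ambient n = {v. \<forall>i. i \<notin> {1..n} \<longrightarrow> v i = 0}"

definition linear_code :: "nat \<Rightarrow> (nat \<Rightarrow> 'a::field) set \<Rightarrow> bool" where
  "linear_code n C \<longleftrightarrow> module.subspace fscale C \<and> C \<subseteq> ambient n"

definition code_dim :: "(nat \<Rightarrow> 'a::field) set \<Rightarrow> nat" where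
  "code_dim D = vector_space.dim fscale D"

definition dual_code :: "nat \<Rightarrow> (nat \<Rightarrow> 'a::field) set \<Rightarrow> (nat \<Rightarrow> 'a) set" where
  "dual_code n C = {u \<in> ambient n. \<forall>c\<in>C. (\<Sum>i=1..n. u i * c i) = 0}"

definition supp :: "(nat \<Rightarrow> 'a::zero) \<Rightarrow> nat set" where
  "supp u = {i. u i \<noteq> 0}"

definition supp_set :: "(nat \<Rightarrow> 'a::zero) set \<Rightarrow> nat set" where
  "supp_set D = (\<Union>u\<in>D. supp u)"

text \<open>Ideal generated by J in the poset given by the order relation R ((i,j) \<in> R means i \<le> j).\<close>
definition ideal_gen :: "nat rel \<Rightarrow> nat set \<Rightarrow> nat set" where
  "ideal_gen R J = {i. \<exists>j\<in>J. (i, j) \<in> R}"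

definition poset_weight :: "nat rel \<Rightarrow> (nat \<Rightarrow> 'a::zero) set \<Rightarrow> nat" where
  "poset_weight R D = card (ideal_gen R (supp_set D))"

definition gen_min_weight :: "nat rel \<Rightarrow> (nat \<Rightarrow> 'a::field) set \<Rightarrow> nat \<Rightarrow> nat" where
  "gen_min_weight R C r =
     Min {poset_weight R D | D. module.subspace fscale D \<and> D \<subseteq> C \<and> code_dim D = r}"

end

theory Submission imports Defs "HOL-Library.FuncSet" begin

interpretation fs: vector_space "fscale :: 'a::field \<Rightarrow> (nat \<Rightarrow> 'a) \<Rightarrow> _"
  by unfold_locales (auto simp: fscale_def algebra_simps fun_eq_iff)

definition E :: "nat set \<Rightarrow> (nat \<Rightarrow> 'a::zero) set" where
  "E S = {v. \<forall>i. i \<notin> S \<longrightarrow> v i = 0}"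

lemma card_E:
  assumes "finite S"
  shows "card (E S :: (nat \<Rightarrow> 'a::{finite,zero}) set) = card (UNIV :: 'a set) ^ card S"
proof -
  have "bij_betw (\<lambda>v. restrict v S) (E S :: (nat \<Rightarrow> 'a) set) (PiE S (\<lambda>_. UNIV))"
  proof (rule bij_betwI[where g = "\<lambda>g i. if i \<in> S then g i else 0"])
    show "(\<lambda>v. restrict v S) \<in> E S \<rightarrow> PiE S (\<lambda>_. UNIV)" by auto
    show "(\<lambda>g i. if i \<in> S then g i else 0) \<in> PiE S (\<lambda>_. UNIV) \<rightarrow> (E S :: (nat \<Rightarrow> 'a) set)"
      by (auto simp: E_def)
    show "\<And>x. x \<in> E S \<Longrightarrow> (\<lambda>i. if i \<in> S then restrict x S i else 0) = x"
      by (auto simp: E_def fun_eq_iff)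
    show "\<And>y. y \<in> PiE S (\<lambda>_. UNIV) \<Longrightarrow> restrict (\<lambda>i. if i \<in> S then y i else 0) S = y"
      by (auto simp: fun_eq_iff PiE_def extensional_def)
  qed
  then have "card (E S :: (nat \<Rightarrow> 'a) set) = card (PiE S (\<lambda>_. UNIV :: 'a set))"
    by (rule bij_betw_same_card)
  also have "\<dots> = card (UNIV :: 'a set) ^ card S" using assms by (simp add: card_PiE)
  finally show ?thesis .
qed


lemma card_quot:
  fixes A K :: "'b::ab_group_add set"
  assumes fin: "finite A" and KA: "K \<subseteq> A"
    and eq: "\<forall>x\<in>A. \<forall>y\<in>A. (f x = f y) = (y - x \<in> K)"
    and cl: "\<forall>x\<in>A. \<forall>k\<in>K. x + k \<in> A"
  shows "card A = card (f ` A) * card K"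
proof -
  have Aeq: "A = (\<Union>z\<in>f ` A. {x\<in>A. f x = z})" by auto
  have "card A = (\<Sum>z\<in>f ` A. card {x\<in>A. f x = z})"
    apply (subst Aeq)
    apply (rule card_UN_disjoint)
    using fin by auto
  also have "\<dots> = (\<Sum>z\<in>f ` A. card K)"
  proof (rule sum.cong[OF refl])
    fix z assume "z \<in> f ` A"
    then obtain x0 where x0: "x0 \<in> A" "z = f x0" by auto
    have "{x\<in>A. f x = z} = (\<lambda>k. x0 + k) ` K"
    proof
      show "{x \<in> A. f x = z} \<subseteq> (\<lambda>k. x0 + k) ` K"
      proof
        fix x assume "x \<in> {x \<in> A. f x = z}"
        then have "x \<in> A" "f x0 = f x" using x0 by auto
        then have "x - x0 \<in> K" using eq x0 by blast
        moreover have "x = x0 + (x - x0)" by simp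
        ultimately show "x \<in> (\<lambda>k. x0 + k) ` K" by blast
      qed
      show "(\<lambda>k. x0 + k) ` K \<subseteq> {x \<in> A. f x = z}"
      proof
        fix x assume "x \<in> (\<lambda>k. x0 + k) ` K"
        then obtain k where k: "k \<in> K" "x = x0 + k" by auto
        then have xA: "x \<in> A" using cl x0 by auto
        have "x - x0 \<in> K" using k by simp
        then have "f x0 = f x" using eq x0 xA by blast
        then show "x \<in> {x \<in> A. f x = z}" using xA x0 by auto
      qed
    qed
    moreover have "card ((\<lambda>k. x0 + k) ` K) = card K"
      by (rule card_image) (auto simp: inj_on_def)
    ultimately show "card {x\<in>A. f x = z} = card K" by simp
  qed
  also have "\<dots> = card (f ` A) * card K" by simp
  finally show ?thesis .
qed

lemma fscale_sum_diff:
  "(\<Sum>b\<in>B. fscale (c b - c' b) b) = (\<Sum>b\<in>B. fscale (c b) b) - (\<Sum>b\<in>B. fscale (c' b) b)"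
proof -
  have "\<And>b. fscale (c b - c' b) b = fscale (c b) b - fscale (c' b) b"
    by (simp add: fscale_def fun_eq_iff algebra_simps)
  then show ?thesis by (simp add: sum_subtractf)
qed

lemma card_subspace:
  fixes V :: "(nat \<Rightarrow> 'a::{finite,field}) set"
  assumes sub: "fs.subspace V" and fin: "finite V"
  shows "card V = card (UNIV :: 'a set) ^ fs.dim V"
proof -
  obtain B where B: "B \<subseteq> V" "fs.independent B" "V \<subseteq> fs.span B" "card B = fs.dim V"
    by (rule fs.basis_exists)
  have finB: "finite B" using B(1) fin finite_subset by blast
  have spanB: "fs.span B = V"
    using B(1,3) fs.span_minimal[OF B(1) sub] by auto
  define g where "g c = (\<Sum>b\<in>B. fscale (c b) b)" for c :: "(nat \<Rightarrow> 'a) \<Rightarrow> 'a"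
  have "bij_betw g (PiE B (\<lambda>_. UNIV)) V"
  proof (rule bij_betw_imageI)
    show "inj_on g (PiE B (\<lambda>_. UNIV))"
    proof (rule inj_onI)
      fix c c' assume c: "c \<in> PiE B (\<lambda>_. UNIV)" and c': "c' \<in> PiE B (\<lambda>_. UNIV)" and "g c = g c'"
      then have "(\<Sum>b\<in>B. fscale (c b - c' b) b) = 0"
        by (simp add: g_def fscale_sum_diff)
      then have "\<forall>b\<in>B. c b - c' b = 0"
        using fs.dependent_finite[OF finB, THEN iffD2, OF exI[of _ "\<lambda>b. c b - c' b"]] B(2) by blast
      then show "c = c'" using c c' by (auto intro: PiE_ext)
    qed
    show "g ` PiE B (\<lambda>_. UNIV) = V"
    proof
      show "g ` PiE B (\<lambda>_. UNIV) \<subseteq> V"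
      proof
        fix v assume "v \<in> g ` PiE B (\<lambda>_. UNIV)"
        then obtain c where "v = g c" by auto
        moreover have "g c \<in> fs.span B" unfolding g_def
          by (intro fs.span_sum fs.span_scale fs.span_base)
        ultimately show "v \<in> V" using spanB by simp
      qed
      show "V \<subseteq> g ` PiE B (\<lambda>_. UNIV)"
      proof
        fix v assume "v \<in> V"
        then have "v \<in> range (\<lambda>u. \<Sum>b\<in>B. fscale (u b) b)"
          using spanB fs.span_finite[OF finB] by auto
        then obtain u where u: "v = (\<Sum>b\<in>B. fscale (u b) b)" by auto
        have "v = g (restrict u B)" unfolding g_def u by (rule sum.cong) auto
        then show "v \<in> g ` PiE B (\<lambda>_. UNIV)" by auto
      qed
    qed
  qed
  then have "card V = card (PiE B (\<lambda>_. UNIV :: 'a set))"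
    by (simp add: bij_betw_same_card)
  also have "\<dots> = card (UNIV :: 'a set) ^ fs.dim V" using finB B(4) by (simp add: card_PiE)
  finally show ?thesis .
qed

lemma card_field_ge2: "2 \<le> card (UNIV :: 'a::{finite,field} set)"
proof -
  have "card {0::'a, 1} = 2" by simp
  moreover have "card {0::'a, 1} \<le> card (UNIV :: 'a set)" by (rule card_mono) auto
  ultimately show ?thesis by simp
qed


lemma sum_fun_apply: "(sum f A) x = (\<Sum>a\<in>A. f a x)" for f :: "'c \<Rightarrow> nat \<Rightarrow> 'b::comm_monoid_add"
  by (induction A rule: infinite_finite_induct) auto

definition dotJ :: "nat set \<Rightarrow> (nat \<Rightarrow> 'a::field) \<Rightarrow> (nat \<Rightarrow> 'a) \<Rightarrow> 'a" where
  "dotJ J u c = (\<Sum>j\<in>J. u j * c j)"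

lemma dotJ_add: "dotJ J (u + v) c = dotJ J u c + dotJ J v c"
  by (simp add: dotJ_def sum.distrib distrib_right)
lemma dotJ_diff: "dotJ J (u - v) c = dotJ J u c - dotJ J v c"
  by (simp add: dotJ_def sum_subtractf left_diff_distrib)
lemma dotJ_scale: "dotJ J (fscale a u) c = a * dotJ J u c"
  by (simp add: dotJ_def fscale_def sum_distrib_left mult.assoc)
lemma dotJ_sum: "dotJ J (sum f S) c = (\<Sum>x\<in>S. dotJ J (f x) c)"
proof (induction S rule: infinite_finite_induct)
  case (infinite S) then show ?case by (simp add: dotJ_def)
next
  case empty then show ?case by (simp add: dotJ_def)
next
  case (insert x F) then show ?case by (simp only: sum.insert[OF insert(1,2)] dotJ_add insert.IH)
qed
lemma dotJ_add2: "dotJ J u (c + d) = dotJ J u c + dotJ J u d"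
  by (simp add: dotJ_def sum.distrib distrib_left)
lemma dotJ_scale2: "dotJ J u (fscale a c) = a * dotJ J u c"
  by (simp add: dotJ_def fscale_def sum_distrib_left mult.left_commute)
lemma dotJ_zero2: "dotJ J u 0 = 0"
  by (simp add: dotJ_def)

lemma E_zero: "0 \<in> E J" by (simp add: E_def)
lemma E_add: "u \<in> E J \<Longrightarrow> v \<in> E J \<Longrightarrow> u + v \<in> E J" for u :: "nat \<Rightarrow> 'b::monoid_add"
  by (simp add: E_def)
lemma E_diff: "u \<in> E J \<Longrightarrow> v \<in> E J \<Longrightarrow> u - v \<in> E J" for u :: "nat \<Rightarrow> 'b::ab_group_add"
  by (auto simp: E_def)
lemma E_scale: "u \<in> E J \<Longrightarrow> fscale a u \<in> E J" by (simp add: E_def fscale_def)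
lemma E_sum: "(\<And>x. x \<in> S \<Longrightarrow> f x \<in> E J) \<Longrightarrow> sum f S \<in> E J"
  by (induction S rule: infinite_finite_induct) (auto simp: E_zero E_add)

lemma dual_surj:
  fixes B :: "(nat \<Rightarrow> 'a::field) set"
  assumes J: "finite J" and finB: "finite B"
  shows "B \<subseteq> E J \<Longrightarrow> fs.independent B \<Longrightarrow> \<forall>t. \<exists>u\<in>E J. \<forall>b\<in>B. dotJ J u b = t b"
  using finB
proof (induction B rule: finite_induct)
  case empty
  then show ?case using E_zero by blast
next
  case (insert b B')
  have bE: "b \<in> E J" and B'E: "B' \<subseteq> E J" using insert.prems by auto
  have indB': "fs.independent B'" and bnot: "b \<notin> fs.span B'"
    using insert.prems(2) insert.hyps(2) by (simp_all add: fs.independent_insert)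
  have IH: "\<forall>t. \<exists>u\<in>E J. \<forall>b\<in>B'. dotJ J u b = t b"
    using insert.IH B'E indB' by blast
  have "\<exists>k\<in>E J. (\<forall>b'\<in>B'. dotJ J k b' = 0) \<and> dotJ J k b \<noteq> 0"
  proof (rule ccontr)
    assume "\<not> ?thesis"
    then have H: "\<And>k. k \<in> E J \<Longrightarrow> (\<forall>b'\<in>B'. dotJ J k b' = 0) \<Longrightarrow> dotJ J k b = 0" by blast
    have "\<forall>b'. \<exists>u. u \<in> E J \<and> (\<forall>b''\<in>B'. dotJ J u b'' = (if b'' = b' then 1 else 0))"
    proof
      fix b'
      from IH[rule_format, of "\<lambda>b''. if b'' = b' then 1 else 0"]
      show "\<exists>u. u \<in> E J \<and> (\<forall>b''\<in>B'. dotJ J u b'' = (if b'' = b' then 1 else 0))" by blast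
    qed
    then obtain U where U: "\<And>b'. U b' \<in> E J"
      "\<And>b' b''. b'' \<in> B' \<Longrightarrow> dotJ J (U b') b'' = (if b'' = b' then 1 else 0)"
      by metis
    define c where "c b' = dotJ J (U b') b" for b'
    define v where "v = (\<Sum>b'\<in>B'. fscale (c b') b')"
    have "b = v"
    proof
      fix j
      show "b j = v j"
      proof (cases "j \<in> J")
        case False
        then have "b j = 0" using bE by (simp add: E_def)
        moreover have "v j = 0" using False B'E
          by (auto simp: v_def sum_fun_apply fscale_def E_def intro!: sum.neutral)
        ultimately show ?thesis by simp
      next
        case True
        define e where "e = (\<lambda>i. if i = j then 1 else 0 :: 'a)"
        have eE: "e \<in> E J" using True by (simp add: e_def E_def)
        have dote: "dotJ J e x = x j" for x
        proof -
          have "dotJ J e x = (\<Sum>ja\<in>J. if ja = j then x j else 0)"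
            unfolding dotJ_def by (rule sum.cong) (auto simp: e_def)
          then show ?thesis using True J by simp
        qed
        define k where "k = e - (\<Sum>b'\<in>B'. fscale (dotJ J e b') (U b'))"
        have kE: "k \<in> E J" unfolding k_def using eE U(1)
          by (intro E_diff E_sum E_scale) auto
        have "\<forall>b''\<in>B'. dotJ J k b'' = 0"
        proof
          fix b'' assume b'': "b'' \<in> B'"
          have "dotJ J k b'' = dotJ J e b'' - (\<Sum>b'\<in>B'. dotJ J e b' * dotJ J (U b') b'')"
            by (simp add: k_def dotJ_diff dotJ_sum dotJ_scale)
          also have "\<dots> = dotJ J e b'' - (\<Sum>b'\<in>B'. dotJ J e b' * (if b'' = b' then 1 else 0))"
            using U(2)[OF b''] by simp
          also have "\<dots> = 0" using b'' insert.hyps(1) by (simp add: if_distrib cong: if_cong)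
          finally show "dotJ J k b'' = 0" .
        qed
        then have "dotJ J k b = 0" using H kE by blast
        then have "dotJ J e b - (\<Sum>b'\<in>B'. dotJ J e b' * c b') = 0"
          by (simp add: k_def dotJ_diff dotJ_sum dotJ_scale c_def)
        then have "b j = (\<Sum>b'\<in>B'. b' j * c b')" by (simp add: dote)
        also have "\<dots> = v j" by (simp add: v_def sum_fun_apply fscale_def mult.commute)
        finally show ?thesis .
      qed
    qed
    moreover have "v \<in> fs.span B'" unfolding v_def
      by (intro fs.span_sum fs.span_scale fs.span_base)
    ultimately show False using bnot by simp
  qed
  then obtain k where k: "k \<in> E J" "\<forall>b'\<in>B'. dotJ J k b' = 0" "dotJ J k b \<noteq> 0" by blast
  show ?case
  proof
    fix t
    obtain u0 where u0: "u0 \<in> E J" "\<forall>b'\<in>B'. dotJ J u0 b' = t b'" using IH by blast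
    define u where "u = u0 + fscale ((t b - dotJ J u0 b) / dotJ J k b) k"
    have "u \<in> E J" unfolding u_def using u0(1) k(1) by (intro E_add E_scale)
    moreover have "\<forall>b'\<in>insert b B'. dotJ J u b' = t b'"
      using u0(2) k(2,3) by (simp add: u_def dotJ_add dotJ_scale)
    ultimately show "\<exists>u\<in>E J. \<forall>b\<in>insert b B'. dotJ J u b = t b" by blast
  qed
qed


lemma finite_E: "finite S \<Longrightarrow> finite (E S :: (nat \<Rightarrow> 'a::{finite,zero}) set)"
proof -
  assume "finite S"
  then have "card (E S :: (nat \<Rightarrow> 'a) set) > 0" by (simp add: card_E finite_UNIV_card_ge_0)
  then show ?thesis using card_ge_0_finite by blast
qed

lemma orth_card:
  fixes W :: "(nat \<Rightarrow> 'a::{finite,field}) set"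
  assumes J: "finite J" and sub: "fs.subspace W" and WE: "W \<subseteq> E J"
  shows "card (E J :: (nat \<Rightarrow> 'a) set) = card W * card {u\<in>E J. \<forall>w\<in>W. dotJ J u w = 0}"
proof -
  have finW: "finite W" using finite_E[OF J] WE finite_subset by blast
  obtain B where B: "B \<subseteq> W" "fs.independent B" "W \<subseteq> fs.span B" "card B = fs.dim W"
    by (rule fs.basis_exists)
  have finB: "finite B" using B(1) finW finite_subset by blast
  define K where "K = {u\<in>E J. \<forall>w\<in>W. dotJ J u w = 0}"
  have Keq: "K = {u\<in>E J. \<forall>b\<in>B. dotJ J u b = 0}"
  proof
    show "K \<subseteq> {u\<in>E J. \<forall>b\<in>B. dotJ J u b = 0}" using B(1) by (auto simp: K_def)
    show "{u\<in>E J. \<forall>b\<in>B. dotJ J u b = 0} \<subseteq> K"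
    proof
      fix u assume u: "u \<in> {u\<in>E J. \<forall>b\<in>B. dotJ J u b = 0}"
      have "fs.subspace {c. dotJ J u c = 0}"
        by (simp add: fs.subspace_def dotJ_zero2 dotJ_add2 dotJ_scale2)
      then have "fs.span B \<subseteq> {c. dotJ J u c = 0}"
        using u by (intro fs.span_minimal) auto
      then show "u \<in> K" using u B(3) by (auto simp: K_def)
    qed
  qed
  define \<Phi> where "\<Phi> u = restrict (\<lambda>b. dotJ J u b) B" for u
  have "card (E J :: (nat \<Rightarrow> 'a) set) = card (\<Phi> ` E J) * card K"
  proof (rule card_quot)
    show "finite (E J :: (nat \<Rightarrow> 'a) set)" using finite_E[OF J] .
    show "K \<subseteq> E J" by (auto simp: K_def)
    show "\<forall>x\<in>E J. \<forall>y\<in>E J. (\<Phi> x = \<Phi> y) = (y - x \<in> K)"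
    proof (intro ballI)
      fix x y :: "nat \<Rightarrow> 'a" assume x: "x \<in> E J" and y: "y \<in> E J"
      have "(\<Phi> x = \<Phi> y) = (\<forall>b\<in>B. dotJ J x b = dotJ J y b)"
        by (simp add: \<Phi>_def restrict_def fun_eq_iff) metis
      also have "\<dots> = (\<forall>b\<in>B. dotJ J (y - x) b = 0)" by (auto simp: dotJ_diff)
      also have "\<dots> = (y - x \<in> K)" using E_diff[OF y x] by (simp add: Keq)
      finally show "(\<Phi> x = \<Phi> y) = (y - x \<in> K)" .
    qed
    show "\<forall>x\<in>E J. \<forall>k\<in>K. x + k \<in> E J" by (auto simp: K_def intro: E_add)
  qed
  moreover have "\<Phi> ` E J = PiE B (\<lambda>_. UNIV)"
  proof
    show "\<Phi> ` E J \<subseteq> PiE B (\<lambda>_. UNIV)" by (auto simp: \<Phi>_def)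
    show "PiE B (\<lambda>_. UNIV) \<subseteq> \<Phi> ` E J"
    proof
      fix t assume t: "t \<in> PiE B (\<lambda>_. UNIV :: 'a set)"
      obtain u where u: "u \<in> E J" "\<forall>b\<in>B. dotJ J u b = t b"
        using dual_surj[OF J finB] B(1,2) WE by blast
      have "\<Phi> u = t" using u(2) t by (auto simp: \<Phi>_def intro: PiE_ext)
      then show "t \<in> \<Phi> ` E J" using u(1) by blast
    qed
  qed
  moreover have "card (PiE B (\<lambda>_. UNIV :: 'a set)) = card W"
    using card_subspace[OF sub finW] finB B(4) by (simp add: card_PiE)
  ultimately show ?thesis by (simp add: K_def)
qed


abbreviation qq :: "'a::{finite,field} itself \<Rightarrow> nat" where "qq _ \<equiv> card (UNIV :: 'a set)"

lemma E_subspace: "fs.subspace (E X :: (nat \<Rightarrow> 'a::field) set)"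
  by (simp add: fs.subspace_def E_def fscale_def)

lemma dim_card_le:
  fixes D U :: "(nat \<Rightarrow> 'a::{finite,field}) set"
  assumes "fs.subspace D" "fs.subspace U" "D \<subseteq> U" "finite U"
  shows "fs.dim D \<le> fs.dim U"
proof -
  have "card D \<le> card U" using assms by (simp add: card_mono)
  moreover have "finite D" using assms finite_subset by blast
  ultimately have "card (UNIV :: 'a set) ^ fs.dim D \<le> card (UNIV :: 'a set) ^ fs.dim U"
    using card_subspace assms by metis
  then show ?thesis using card_field_ge2[where 'a='a] power_le_imp_le_exp by (metis Suc_1 Suc_le_lessD)
qed

lemma exists_sub:
  fixes U :: "(nat \<Rightarrow> 'a::{finite,field}) set"
  assumes "fs.subspace U" "finite U" "r \<le> fs.dim U"
  shows "\<exists>D. fs.subspace D \<and> D \<subseteq> U \<and> fs.dim D = r"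
proof -
  obtain B where B: "B \<subseteq> U" "fs.independent B" "U \<subseteq> fs.span B" "card B = fs.dim U"
    by (rule fs.basis_exists)
  obtain B' where B': "B' \<subseteq> B" "card B' = r" using obtain_subset_with_card_n assms(3) B(4) by metis
  have "fs.span B' \<subseteq> U"
    using fs.span_minimal[of B' U] B'(1) B(1) assms(1) by auto
  moreover have "fs.dim (fs.span B') = r"
    using fs.dim_eq_card_independent[OF fs.independent_mono[OF B(2) B'(1)]] B'(2) by simp
  ultimately show ?thesis by blast
qed

lemma dim_zero_space: "fs.dim ({0} :: (nat \<Rightarrow> 'a::field) set) = 0"
  using fs.dim_span_eq_card_independent[of "{}"] fs.span_empty by (metis card.empty fs.dim_span fs.independent_empty)

definition is_ideal :: "nat set \<Rightarrow> nat rel \<Rightarrow> nat set \<Rightarrow> bool" where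
  "is_ideal N R I \<longleftrightarrow> I \<subseteq> N \<and> (\<forall>i j. (i, j) \<in> R \<longrightarrow> j \<in> I \<longrightarrow> i \<in> I)"

lemma ideal_conv1: "R \<subseteq> N \<times> N \<Longrightarrow> is_ideal N (R\<inverse>) J \<Longrightarrow> is_ideal N R (N - J)"
  unfolding is_ideal_def by blast
lemma ideal_conv2: "R \<subseteq> N \<times> N \<Longrightarrow> is_ideal N R I \<Longrightarrow> is_ideal N (R\<inverse>) (N - I)"
  unfolding is_ideal_def by blast

lemma maximal_exists:
  assumes "finite I" "I \<noteq> {}" "antisym R" "trans R"
  shows "\<exists>i\<in>I. \<forall>j\<in>I. (i, j) \<in> R \<longrightarrow> j = i"
proof -
  define S where "S x = insert x {j\<in>I. (x, j) \<in> R}" for x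
  obtain i0 where "i0 \<in> I" using assms(2) by blast
  then obtain i where i: "i \<in> I" and imin: "\<forall>y. y \<in> I \<longrightarrow> card (S i) \<le> card (S y)"
    using ex_has_least_nat[where P="\<lambda>x. x \<in> I" and m="\<lambda>x. card (S x)"] by blast
  show ?thesis
  proof (intro bexI[OF _ i] ballI impI)
    fix j assume j: "j \<in> I" "(i, j) \<in> R"
    show "j = i"
    proof (rule ccontr)
      assume ne: "j \<noteq> i"
      have sub: "S j \<subseteq> S i"
        using j assms(4) by (auto simp: S_def dest: transD)
      have "i \<notin> S j"
        using j ne assms(3) by (auto simp: S_def dest: antisymD)
      moreover have "i \<in> S i" by (simp add: S_def)
      ultimately have "S j \<subset> S i" using sub by blast
      moreover have "finite (S i)" using assms(1) by (simp add: S_def)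
      ultimately have "card (S j) < card (S i)"
        by (intro psubset_card_mono) auto
      then show False using imin j(1) by (meson not_le)
    qed
  qed
qed


lemma gmw_char:
  fixes V :: "(nat \<Rightarrow> 'a::{finite,field}) set"
  assumes sub: "fs.subspace V" and VE: "V \<subseteq> E {1..n}" and RN: "R \<subseteq> {1..n} \<times> {1..n}"
    and rfl: "\<forall>i\<in>{1..n}. (i, i) \<in> R" and tr: "trans R" and r: "r \<le> fs.dim V"
  shows "(\<exists>I. is_ideal {1..n} R I \<and> card I = gen_min_weight R V r \<and> r \<le> fs.dim (V \<inter> E I))
        \<and> (\<forall>I. is_ideal {1..n} R I \<and> r \<le> fs.dim (V \<inter> E I) \<longrightarrow> gen_min_weight R V r \<le> card I)"
proof -
  have finV: "finite V" using VE finite_E[of "{1..n}"] finite_subset by blast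
  define S where "S = {poset_weight R D | D. fs.subspace D \<and> D \<subseteq> V \<and> code_dim D = r}"
  have gmw: "gen_min_weight R V r = Min S" by (simp add: gen_min_weight_def S_def)
  have igN: "ideal_gen R X \<subseteq> {1..n}" for X using RN by (auto simp: ideal_gen_def)
  have finS: "finite S"
  proof (rule finite_subset)
    show "S \<subseteq> {..n}"
    proof
      fix w assume "w \<in> S"
      then obtain D :: "(nat \<Rightarrow> 'a) set" where "w = poset_weight R D" by (auto simp: S_def)
      then have "w \<le> card {1..n}" unfolding poset_weight_def using igN card_mono[of "{1..n}"] by simp
      then show "w \<in> {..n}" by simp
    qed
  qed simp
  have Sne: "S \<noteq> {}"
    using exists_sub[OF sub finV r] by (auto simp: S_def code_dim_def)
  have subI: "fs.subspace (V \<inter> E I)" for I using fs.subspace_inter[OF sub E_subspace] .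
  have finI: "finite (V \<inter> E I)" for I using finV by simp
  have part1: "\<exists>I. is_ideal {1..n} R I \<and> card I = gen_min_weight R V r \<and> r \<le> fs.dim (V \<inter> E I)"
  proof -
    have "Min S \<in> S" using finS Sne by (rule Min_in)
    then obtain D where D: "Min S = poset_weight R D" "fs.subspace D" "D \<subseteq> V" "fs.dim D = r"
      by (auto simp: S_def code_dim_def)
    define I where "I = ideal_gen R (supp_set D)"
    have "is_ideal {1..n} R I"
      unfolding is_ideal_def I_def using igN tr by (auto simp: ideal_gen_def dest: transD)
    moreover have "card I = gen_min_weight R V r" using D(1) by (simp add: gmw I_def poset_weight_def)
    moreover have "D \<subseteq> V \<inter> E I"
    proof
      fix v assume v: "v \<in> D"
      have "v i = 0" if "i \<notin> I" for i
      proof (rule ccontr)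
        assume vi: "v i \<noteq> 0"
        then have "i \<in> {1..n}" using v D(3) VE by (auto simp: E_def)
        then have "(i, i) \<in> R" using rfl by blast
        moreover have "i \<in> supp_set D" using v vi by (auto simp: supp_set_def supp_def)
        ultimately have "i \<in> I" by (auto simp: I_def ideal_gen_def)
        then show False using that by simp
      qed
      then show "v \<in> V \<inter> E I" using v D(3) by (auto simp: E_def)
    qed
    then have "r \<le> fs.dim (V \<inter> E I)"
      using dim_card_le[OF D(2) subI _ finI] D(4) by auto
    ultimately show ?thesis by blast
  qed
  have part2: "\<forall>I. is_ideal {1..n} R I \<and> r \<le> fs.dim (V \<inter> E I) \<longrightarrow> gen_min_weight R V r \<le> card I"
  proof (intro allI impI, elim conjE)
    fix I assume I: "is_ideal {1..n} R I" and rI: "r \<le> fs.dim (V \<inter> E I)"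
    obtain D where D: "fs.subspace D" "D \<subseteq> V \<inter> E I" "fs.dim D = r"
      using exists_sub[OF subI finI rI] by blast
    have "poset_weight R D \<in> S" using D by (auto simp: S_def code_dim_def)
    then have "Min S \<le> poset_weight R D" using finS by simp
    moreover have "ideal_gen R (supp_set D) \<subseteq> I"
    proof
      fix i assume "i \<in> ideal_gen R (supp_set D)"
      then obtain j v where ij: "(i, j) \<in> R" "v \<in> D" "v j \<noteq> 0"
        by (auto simp: ideal_gen_def supp_set_def supp_def)
      then have "j \<in> I" using D(2) by (auto simp: E_def)
      then show "i \<in> I" using I ij(1) by (auto simp: is_ideal_def)
    qed
    then have "poset_weight R D \<le> card I"
      unfolding poset_weight_def using I by (intro card_mono) (auto simp: is_ideal_def intro: finite_subset)
    ultimately show "gen_min_weight R V r \<le> card I" by (simp add: gmw)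
  qed
  show ?thesis using part1 part2 by blast
qed

lemma dim_drop:
  fixes V :: "(nat \<Rightarrow> 'a::{finite,field}) set"
  assumes sub: "fs.subspace V" and finV: "finite V" and YX: "Y \<subseteq> X" and fin: "finite (X - Y)"
  shows "fs.dim (V \<inter> E X) \<le> fs.dim (V \<inter> E Y) + card (X - Y)"
proof -
  define f where "f v = (\<lambda>i. if i \<in> X - Y then v i else 0)" for v :: "nat \<Rightarrow> 'a"
  have subX: "fs.subspace (V \<inter> E X)" using fs.subspace_inter[OF sub E_subspace] .
  have subY: "fs.subspace (V \<inter> E Y)" using fs.subspace_inter[OF sub E_subspace] .
  have "card (V \<inter> E X) = card (f ` (V \<inter> E X)) * card (V \<inter> E Y)"
  proof (rule card_quot)
    show "finite (V \<inter> E X)" using finV by simp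
    show "V \<inter> E Y \<subseteq> V \<inter> E X" using YX by (auto simp: E_def)
    show "\<forall>x\<in>V \<inter> E X. \<forall>y\<in>V \<inter> E X. (f x = f y) = (y - x \<in> V \<inter> E Y)"
    proof (intro ballI)
      fix x y assume x: "x \<in> V \<inter> E X" and y: "y \<in> V \<inter> E X"
      have "y - x \<in> V" using fs.subspace_diff[OF sub] x y by blast
      then show "(f x = f y) = (y - x \<in> V \<inter> E Y)"
        using x y by (auto simp: f_def E_def fun_eq_iff) (metis eq_iff_diff_eq_0)+
    qed
    show "\<forall>x\<in>V \<inter> E X. \<forall>k\<in>V \<inter> E Y. x + k \<in> V \<inter> E X"
      using YX fs.subspace_add[OF sub] by (auto simp: E_def)
  qed
  moreover have "card (f ` (V \<inter> E X)) \<le> card (UNIV :: 'a set) ^ card (X - Y)"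
  proof -
    have "f ` (V \<inter> E X) \<subseteq> E (X - Y)" by (auto simp: f_def E_def)
    then have "card (f ` (V \<inter> E X)) \<le> card (E (X - Y) :: (nat \<Rightarrow> 'a) set)"
      using finite_E[OF fin] by (intro card_mono)
    then show ?thesis using card_E[OF fin, where 'a='a] by simp
  qed
  ultimately have "card (V \<inter> E X) \<le> card (UNIV :: 'a set) ^ card (X - Y) * card (V \<inter> E Y)"
    by simp
  then have "card (UNIV :: 'a set) ^ fs.dim (V \<inter> E X)
      \<le> card (UNIV :: 'a set) ^ (card (X - Y) + fs.dim (V \<inter> E Y))"
    using card_subspace[OF subX] card_subspace[OF subY] finV by (simp add: power_add)
  then show ?thesis using card_field_ge2[where 'a='a] power_le_imp_le_exp
    by (metis Suc_1 Suc_le_lessD add.commute)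
qed


lemma ambient_E: "ambient n = E {1..n}" by (simp add: ambient_def E_def)

lemma dual_sub:
  fixes C :: "(nat \<Rightarrow> 'a::field) set"
  shows "fs.subspace (dual_code n C)" and "dual_code n C \<subseteq> E {1..n}"
proof -
  show "dual_code n C \<subseteq> E {1..n}" by (auto simp: dual_code_def ambient_E)
  show "fs.subspace (dual_code n C)"
    unfolding fs.subspace_def
  proof (intro conjI ballI allI)
    show "0 \<in> dual_code n C" by (simp add: dual_code_def ambient_def)
    fix x y assume x: "x \<in> dual_code n C" and y: "y \<in> dual_code n C"
    then show "x + y \<in> dual_code n C"
      by (auto simp: dual_code_def ambient_def distrib_right sum.distrib)
  next
    fix c x assume x: "x \<in> dual_code n C"
    then show "fscale c x \<in> dual_code n C"
      by (auto simp: dual_code_def ambient_def fscale_def mult.assoc sum_distrib_left[symmetric])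
  qed
qed

lemma pow_inj: "card (UNIV :: 'a::{finite,field} set) ^ a = card (UNIV :: 'a set) ^ b \<Longrightarrow> a = b"
  using card_field_ge2[where 'a='a] by (simp add: power_inject_exp)

lemma key:
  fixes C :: "(nat \<Rightarrow> 'a::{finite,field}) set"
  assumes lc: "linear_code n C" and J: "J \<subseteq> {1..n}"
  shows "fs.dim (dual_code n C \<inter> E J) + fs.dim C = card J + fs.dim (C \<inter> E ({1..n} - J))"
proof -
  let ?N = "{1..n}"
  let ?q = "card (UNIV :: 'a set)"
  have sub: "fs.subspace C" and CE: "C \<subseteq> E ?N" using lc by (auto simp: linear_code_def ambient_E)
  have finC: "finite C" using CE finite_E[of ?N] finite_subset by blast
  have finJ: "finite J" using J finite_subset by blast
  define \<pi> where "\<pi> v = (\<lambda>i. if i \<in> J then v i else 0)" for v :: "nat \<Rightarrow> 'a"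
  define W where "W = \<pi> ` C"
  define K where "K = C \<inter> E (?N - J)"
  have subK: "fs.subspace K" unfolding K_def using fs.subspace_inter[OF sub E_subspace] .
  have finK: "finite K" using finC by (simp add: K_def)
  have c1: "card C = card W * card K"
    unfolding W_def
  proof (rule card_quot)
    show "finite C" by (rule finC)
    show "K \<subseteq> C" by (simp add: K_def)
    show "\<forall>x\<in>C. \<forall>y\<in>C. (\<pi> x = \<pi> y) = (y - x \<in> K)"
    proof (intro ballI)
      fix x y assume x: "x \<in> C" and y: "y \<in> C"
      have "y - x \<in> C" using fs.subspace_diff[OF sub] x y by blast
      moreover have "x \<in> E ?N" "y \<in> E ?N" using x y CE by auto
      ultimately show "(\<pi> x = \<pi> y) = (y - x \<in> K)"
        by (auto simp: K_def \<pi>_def E_def fun_eq_iff)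
    qed
    show "\<forall>x\<in>C. \<forall>k\<in>K. x + k \<in> C" using fs.subspace_add[OF sub] by (auto simp: K_def)
  qed
  have subW: "fs.subspace W"
    unfolding fs.subspace_def W_def
  proof (intro conjI ballI allI)
    have "0 = \<pi> 0" by (simp add: \<pi>_def fun_eq_iff)
    then show "0 \<in> \<pi> ` C" using fs.subspace_0[OF sub] by blast
  next
    fix x y assume "x \<in> \<pi> ` C" "y \<in> \<pi> ` C"
    then obtain a b where ab: "a \<in> C" "b \<in> C" "x = \<pi> a" "y = \<pi> b" by auto
    then have "x + y = \<pi> (a + b)" by (simp add: \<pi>_def fun_eq_iff)
    then show "x + y \<in> \<pi> ` C" using fs.subspace_add[OF sub ab(1,2)] by blast
  next
    fix c x assume "x \<in> \<pi> ` C"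
    then obtain a where a: "a \<in> C" "x = \<pi> a" by auto
    then have "fscale c x = \<pi> (fscale c a)" by (simp add: \<pi>_def fscale_def fun_eq_iff)
    then show "fscale c x \<in> \<pi> ` C" using fs.subspace_scale[OF sub a(1)] by blast
  qed
  have WE: "W \<subseteq> E J" by (auto simp: W_def \<pi>_def E_def)
  have finW: "finite W" using finC by (simp add: W_def)
  have c2: "card (E J :: (nat \<Rightarrow> 'a) set) = card W * card {u\<in>E J. \<forall>w\<in>W. dotJ J u w = 0}"
    by (rule orth_card[OF finJ subW WE])
  have Oeq: "{u\<in>E J. \<forall>w\<in>W. dotJ J u w = 0} = dual_code n C \<inter> E J"
  proof -
    have "(\<Sum>i=1..n. u i * c i) = dotJ J u (\<pi> c)" if u: "u \<in> E J" for u c :: "nat \<Rightarrow> 'a"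
    proof -
      have "(\<Sum>i=1..n. u i * c i) = (\<Sum>i\<in>J. u i * c i)"
        using J u by (intro sum.mono_neutral_right) (auto simp: E_def)
      also have "\<dots> = dotJ J u (\<pi> c)" by (simp add: dotJ_def \<pi>_def)
      finally show ?thesis .
    qed
    moreover have "E J \<subseteq> ambient n" using J by (auto simp: ambient_E E_def)
    ultimately show ?thesis by (auto simp: dual_code_def W_def)
  qed
  have subO: "fs.subspace (dual_code n C \<inter> E J)"
    using fs.subspace_inter[OF dual_sub(1) E_subspace] .
  have finO: "finite (dual_code n C \<inter> E J)" using finite_E[OF finJ] by auto
  have "?q ^ fs.dim C = ?q ^ (fs.dim W + fs.dim K)"
    using c1 card_subspace[OF sub finC] card_subspace[OF subW finW] card_subspace[OF subK finK]
    by (simp add: power_add)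
  then have e1: "fs.dim C = fs.dim W + fs.dim K" by (rule pow_inj)
  have "?q ^ card J = ?q ^ (fs.dim W + fs.dim (dual_code n C \<inter> E J))"
    using c2 Oeq card_E[OF finJ, where 'a='a] card_subspace[OF subW finW] card_subspace[OF subO finO]
    by (simp add: power_add)
  then have e2: "card J = fs.dim W + fs.dim (dual_code n C \<inter> E J)" by (rule pow_inj)
  show ?thesis using e1 e2 by (simp add: K_def)
qed


lemma E_empty_inter:
  fixes V :: "(nat \<Rightarrow> 'a::field) set"
  assumes "fs.subspace V" shows "V \<inter> E {} = {0}"
  using fs.subspace_0[OF assms] by (auto simp: E_def fun_eq_iff)

lemma gmw_char':
  fixes V :: "(nat \<Rightarrow> 'a::{finite,field}) set"
  assumes sub: "fs.subspace V" and VE: "V \<subseteq> E {1..n}" and po: "partial_order_on {1..n} R"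
    and r: "r \<le> fs.dim V"
  shows "(\<exists>I. is_ideal {1..n} R I \<and> card I = gen_min_weight R V r \<and> r \<le> fs.dim (V \<inter> E I))"
    "\<And>I. is_ideal {1..n} R I \<Longrightarrow> r \<le> fs.dim (V \<inter> E I) \<Longrightarrow> gen_min_weight R V r \<le> card I"
proof -
  have RN: "R \<subseteq> {1..n} \<times> {1..n}" and rfl: "\<forall>i\<in>{1..n}. (i, i) \<in> R" and tr: "trans R"
    using partial_order_onD[OF po] by (auto simp: refl_on_def)
  note c = gmw_char[OF sub VE RN rfl tr r]
  show "(\<exists>I. is_ideal {1..n} R I \<and> card I = gen_min_weight R V r \<and> r \<le> fs.dim (V \<inter> E I))"
    using c by blast
  show "\<And>I. is_ideal {1..n} R I \<Longrightarrow> r \<le> fs.dim (V \<inter> E I) \<Longrightarrow> gen_min_weight R V r \<le> card I"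
    using c by blast
qed

lemma gmw_range:
  fixes V :: "(nat \<Rightarrow> 'a::{finite,field}) set"
  assumes sub: "fs.subspace V" and VE: "V \<subseteq> E {1..n}" and po: "partial_order_on {1..n} R"
    and r1: "1 \<le> r" and r: "r \<le> fs.dim V"
  shows "1 \<le> gen_min_weight R V r \<and> gen_min_weight R V r \<le> n"
proof -
  obtain I where I: "is_ideal {1..n} R I" "card I = gen_min_weight R V r" "r \<le> fs.dim (V \<inter> E I)"
    using gmw_char'(1)[OF sub VE po r] by blast
  have "I \<noteq> {}"
  proof
    assume "I = {}"
    then have "fs.dim (V \<inter> E I) = 0" using E_empty_inter[OF sub] dim_zero_space by simp
    then show False using I(3) r1 by simp
  qed
  moreover have "I \<subseteq> {1..n}" using I(1) by (simp add: is_ideal_def)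
  ultimately have "1 \<le> card I" "card I \<le> n"
    using card_mono[of "{1..n}" I] finite_subset[of I "{1..n}"]
    by (auto simp: card_gt_0_iff Suc_le_eq)
  then show ?thesis using I(2) by simp
qed

lemma gmw_step:
  fixes V :: "(nat \<Rightarrow> 'a::{finite,field}) set"
  assumes sub: "fs.subspace V" and VE: "V \<subseteq> E {1..n}" and po: "partial_order_on {1..n} R"
    and r1: "1 \<le> r" and r: "r < fs.dim V"
  shows "gen_min_weight R V r < gen_min_weight R V (Suc r)"
proof -
  have finV: "finite V" using VE finite_E[of "{1..n}"] finite_subset by blast
  obtain I where I: "is_ideal {1..n} R I" "card I = gen_min_weight R V (Suc r)"
    "Suc r \<le> fs.dim (V \<inter> E I)"
    using gmw_char'(1)[OF sub VE po, of "Suc r"] r by auto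
  have IN: "I \<subseteq> {1..n}" using I(1) by (simp add: is_ideal_def)
  then have finI: "finite I" using finite_subset by blast
  have "I \<noteq> {}"
  proof
    assume "I = {}"
    then have "fs.dim (V \<inter> E I) = 0" using E_empty_inter[OF sub] dim_zero_space by simp
    then show False using I(3) by simp
  qed
  then obtain i where i: "i \<in> I" "\<forall>j\<in>I. (i, j) \<in> R \<longrightarrow> j = i"
    using maximal_exists[OF finI] partial_order_onD[OF po] by blast
  have I': "is_ideal {1..n} R (I - {i})"
    using I(1) i by (auto simp: is_ideal_def)
  have "fs.dim (V \<inter> E I) \<le> fs.dim (V \<inter> E (I - {i})) + card (I - (I - {i}))"
    using dim_drop[OF sub finV, of "I - {i}" I] finI by auto
  moreover have "card (I - (I - {i})) = 1" using i(1) by (simp add: Diff_Diff_Int)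
  ultimately have "r \<le> fs.dim (V \<inter> E (I - {i}))" using I(3) by simp
  then have "gen_min_weight R V r \<le> card (I - {i})"
    using gmw_char'(2)[OF sub VE po, of r] r I' by simp
  also have "\<dots> < card I"
  proof -
    have "card I > 0" using finI i(1) card_gt_0_iff by blast
    then show ?thesis using finI i(1) by (simp add: card_Diff_singleton)
  qed
  finally show ?thesis using I(2) by simp
qed

lemma gmw_mono:
  fixes V :: "(nat \<Rightarrow> 'a::{finite,field}) set"
  assumes sub: "fs.subspace V" and VE: "V \<subseteq> E {1..n}" and po: "partial_order_on {1..n} R"
    and r1: "1 \<le> r"
  shows "Suc (r + m) \<le> fs.dim V \<Longrightarrow> gen_min_weight R V r < gen_min_weight R V (Suc (r + m))"
proof (induction m)
  case 0
  then show ?case using gmw_step[OF sub VE po r1] by simp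
next
  case (Suc m)
  then have "gen_min_weight R V r < gen_min_weight R V (Suc (r + m))" by simp
  also have "\<dots> < gen_min_weight R V (Suc (Suc (r + m)))"
    using gmw_step[OF sub VE po, of "Suc (r + m)"] Suc.prems by simp
  finally show ?case by simp
qed

lemma gmw_inj:
  fixes V :: "(nat \<Rightarrow> 'a::{finite,field}) set"
  assumes sub: "fs.subspace V" and VE: "V \<subseteq> E {1..n}" and po: "partial_order_on {1..n} R"
  shows "inj_on (gen_min_weight R V) {1..fs.dim V}"
proof -
  have "strict_mono_on {1..fs.dim V} (gen_min_weight R V)"
  proof (rule strict_mono_onI)
    fix r s assume "r \<in> {1..fs.dim V}" "s \<in> {1..fs.dim V}" "r < s"
    then obtain m where "s = Suc (r + m)" "1 \<le> r" "s \<le> fs.dim V"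
      by (metis add_Suc_right atLeastAtMost_iff less_iff_Suc_add)
    then show "gen_min_weight R V r < gen_min_weight R V s"
      using gmw_mono[OF sub VE po] by blast
  qed
  then show ?thesis by (rule strict_mono_on_imp_inj_on)
qed


theorem theorem3:
  fixes C :: "(nat \<Rightarrow> 'a::{finite, field}) set"
    and n k :: nat
    and R :: "nat rel"
  assumes "linear_code n C"
    and "code_dim C = k"
    and "partial_order_on {1..n} R"
  shows "(\<lambda>r. gen_min_weight R C r) ` {1..k}
           \<inter> (\<lambda>s. n + 1 - gen_min_weight (R\<inverse>) (dual_code n C) s) ` {1..n-k} = {}
      \<and> {1..n} = (\<lambda>r. gen_min_weight R C r) ` {1..k}
           \<union> (\<lambda>s. n + 1 - gen_min_weight (R\<inverse>) (dual_code n C) s) ` {1..n-k}"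
proof -
  let ?N = "{1..n}"
  let ?D = "dual_code n C"
  let ?d = "gen_min_weight R C"
  let ?d' = "gen_min_weight (R\<inverse>) ?D"
  note lc = assms(1) and po = assms(3)
  have po': "partial_order_on ?N (R\<inverse>)" using po by simp
  have RN: "R \<subseteq> ?N \<times> ?N" using partial_order_onD[OF po] by blast
  have sub: "fs.subspace C" and CE: "C \<subseteq> E ?N" using lc by (auto simp: linear_code_def ambient_E)
  have dimC: "fs.dim C = k" using assms(2) by (simp add: code_dim_def)
  note subD = dual_sub(1)[of n C] and DE = dual_sub(2)[of n C]
  have keyJ: "fs.dim (?D \<inter> E J) + k = card J + fs.dim (C \<inter> E (?N - J))" if "J \<subseteq> ?N" for J
    using key[OF lc that] dimC by simp
  have dimD: "fs.dim ?D + k = n"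
  proof -
    have "?D \<inter> E ?N = ?D" using DE by blast
    moreover have "C \<inter> E (?N - ?N) = {0}" using E_empty_inter[OF sub] by simp
    ultimately show ?thesis using keyJ[of ?N] dim_zero_space by simp
  qed
  have disj: "?d ` {1..k} \<inter> (\<lambda>s. n + 1 - ?d' s) ` {1..n-k} = {}"
  proof (rule ccontr)
    assume "?d ` {1..k} \<inter> (\<lambda>s. n + 1 - ?d' s) ` {1..n-k} \<noteq> {}"
    then obtain r s where rs: "1 \<le> r" "r \<le> k" "1 \<le> s" "s \<le> n - k" "?d r = n + 1 - ?d' s"
      by auto
    have sD: "s \<le> fs.dim ?D" using rs dimD by simp
    have rC: "r \<le> fs.dim C" using rs dimC by simp
    have d'r: "1 \<le> ?d' s" "?d' s \<le> n" using gmw_range[OF subD DE po' rs(3) sD] by auto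
    define t where "t = ?d r"
    have tsum: "t + ?d' s = n + 1" using rs(5) d'r by (simp add: t_def)
    obtain I where I: "is_ideal ?N R I" "card I = t" "r \<le> fs.dim (C \<inter> E I)"
      using gmw_char'(1)[OF sub CE po rC] by (auto simp: t_def)
    have IN: "I \<subseteq> ?N" using I(1) by (simp add: is_ideal_def)
    define J' where "J' = ?N - I"
    have J'id: "is_ideal ?N (R\<inverse>) J'" unfolding J'_def by (rule ideal_conv2[OF RN I(1)])
    have cJ': "card J' + t = n" using IN I(2) unfolding J'_def
      by (metis card_Diff_subset card_atLeastAtMost diff_Suc_1 finite_subset finite_atLeastAtMost
          le_add_diff_inverse2 card_mono)
    have kJ': "fs.dim (?D \<inter> E J') + k = card J' + fs.dim (C \<inter> E I)"
      using keyJ[of J'] IN by (simp add: J'_def Diff_Diff_Int Int_absorb1)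
    show False
    proof (cases "s \<le> fs.dim (?D \<inter> E J')")
      case True
      then have "?d' s \<le> card J'" using gmw_char'(2)[OF subD DE po' sD J'id] by simp
      then show False using cJ' tsum by simp
    next
      case False
      obtain J'' where J'': "is_ideal ?N (R\<inverse>) J''" "card J'' = ?d' s" "s \<le> fs.dim (?D \<inter> E J'')"
        using gmw_char'(1)[OF subD DE po' sD] by blast
      have J''N: "J'' \<subseteq> ?N" using J''(1) by (simp add: is_ideal_def)
      define I'' where "I'' = ?N - J''"
      have I''id: "is_ideal ?N R I''" unfolding I''_def using ideal_conv1[OF RN J''(1)] .
      have cI'': "card I'' + card J'' = n" using J''N unfolding I''_def
        by (metis card_Diff_subset card_atLeastAtMost diff_Suc_1 finite_subset finite_atLeastAtMost
          le_add_diff_inverse2 card_mono)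
      have "\<not> r \<le> fs.dim (C \<inter> E I'')"
      proof
        assume "r \<le> fs.dim (C \<inter> E I'')"
        then have "t \<le> card I''" using gmw_char'(2)[OF sub CE po rC I''id] by (simp add: t_def)
        then show False using cI'' J''(2) tsum by simp
      qed
      moreover have "fs.dim (?D \<inter> E J'') + k = card J'' + fs.dim (C \<inter> E I'')"
        using keyJ[OF J''N] by (simp add: I''_def)
      ultimately show False using False J''(2,3) kJ' cJ' tsum I(3) by linarith
    qed
  qed
  have rangeA: "?d ` {1..k} \<subseteq> ?N"
    using gmw_range[OF sub CE po] dimC by auto
  have rangeB: "(\<lambda>s. n + 1 - ?d' s) ` {1..n-k} \<subseteq> ?N"
  proof
    fix x assume "x \<in> (\<lambda>s. n + 1 - ?d' s) ` {1..n-k}"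
    then obtain s where s: "1 \<le> s" "s \<le> n - k" "x = n + 1 - ?d' s" by auto
    then have "1 \<le> ?d' s" "?d' s \<le> n" using gmw_range[OF subD DE po', of s] dimD by auto
    then show "x \<in> ?N" using s by auto
  qed
  have cA: "card (?d ` {1..k}) = k"
    using gmw_inj[OF sub CE po] dimC by (simp add: card_image)
  have injB: "inj_on (\<lambda>s. n + 1 - ?d' s) {1..n-k}"
  proof (rule inj_onI)
    fix s s' assume s: "s \<in> {1..n-k}" and s': "s' \<in> {1..n-k}" and eq: "n + 1 - ?d' s = n + 1 - ?d' s'"
    have "?d' s \<le> n" "?d' s' \<le> n" using gmw_range[OF subD DE po'] s s' dimD by auto
    then have "?d' s = ?d' s'" using eq by simp
    moreover have "inj_on ?d' {1..n-k}" using gmw_inj[OF subD DE po'] dimD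
      by (metis add_diff_cancel_right')
    ultimately show "s = s'" using s s' by (meson inj_onD)
  qed
  have cB: "card ((\<lambda>s. n + 1 - ?d' s) ` {1..n-k}) = n - k"
    using injB by (simp add: card_image)
  have "card (?d ` {1..k} \<union> (\<lambda>s. n + 1 - ?d' s) ` {1..n-k}) = n"
    using card_Un_disjoint[OF _ _ disj] cA cB dimD by simp
  then have "?d ` {1..k} \<union> (\<lambda>s. n + 1 - ?d' s) ` {1..n-k} = ?N"
    using rangeA rangeB by (intro card_subset_eq) auto
  then show ?thesis using disj by simp
qed

end
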